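(* Let $\alpha_1,\dots,\alpha_4$ be constants, $H=H(t,t^-,q,q^-,p,p^-)$ smooth, and $X=\xi(t)\partial_t+\eta(t,q,p)\partial_q+\nu(t,q,p)\partial_p$ with $\xi(t)=\alpha t+f(t)$, where $\alpha$ is a constant and $f$ is $\tau$-periodic. Then, with $\dot\xi=D(\xi)$, $$\frac{\delta\Omega}{\delta p}\equiv X\Big(\frac{\delta\tilde H}{\delta p}\Big)+\frac{\partial\eta}{\partial p}\frac{\delta\tilde H}{\delta q}+\Big(\frac{\partial\nu}{\partial p}+\dot\xi\Big)\frac{\delta\tilde H}{\delta p},$$ $$\frac{\delta\Omega}{\delta q}\equiv X\Big(\frac{\delta\tilde H}{\delta q}\Big)+\Big(\frac{\partial\eta}{\partial q}+\dot\xi\Big)\frac{\delta\tilde H}{\delta q}+\frac{\partial\nu}{\partial q}\frac{\delta\tilde H}{\delta p},$$ $$\frac{\delta\Omega}{\delta t}\equiv X\Big(\frac{\delta\tilde H}{\delta t}\Big)+2\dot\xi\frac{\delta\tilde H}{\delta t}+\frac{\partial\eta}{\partial t}\frac{\delta\tilde H}{\delta q}+\frac{\partial\nu}{\partial t}\frac{\delta\tilde H}{\delta p}.$$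
   Context: Constant delay $\tau>0$; $t^\pm=t\pm\tau$, $f^\pm=f(t\pm\tau)$; scalar $q,p$. $S_\pm$: forward/backward shift operators on expressions ($S_+$ sends $t^-,t,q^-,q,p^-,p,\dot q^-,\dots$ to $t,t^+,q,q^+,p,p^+,\dot q,\dots$); $\xi^\pm=S_\pm(\xi)$ etc.; $H^+=S_+(H)$. $D=\partial_t+\dot q\partial_q+\dot p\partial_p+\ddot q\partial_{\dot q}+\ddot p\partial_{\dot p}+\cdots$ plus analogous terms for variables at $t^-$ and $t^+$. $\tilde H=p^{-}(\alpha_{1}\dot{q}+\alpha_{2}\dot{q}^{-})+p(\alpha_{3}\dot{q}+\alpha_{4}\dot{q}^{-})-H$. For a function $F$ of $(t,t^-,q,q^-,p,p^-,\dot q,\dot q^-,\dot p,\dot p^-)$ the variational operators are $\frac{\delta F}{\delta p}=\frac{\partial F}{\partial p}-D\frac{\partial F}{\partial\dot p}+S_+\Big(\frac{\partial F}{\partial p^-}-D\frac{\partial F}{\partial\dot p^-}\Big)$, $\frac{\delta F}{\delta q}=\frac{\partial F}{\partial q}-D\frac{\partial F}{\partial\dot q}+S_+\Big(\frac{\partial F}{\partial q^-}-D\frac{\partial F}{\partial\dot q^-}\Big)$, $\frac{\delta F}{\delta t}=\frac{\partial F}{\partial t}+D\Big(\dot q\frac{\partial F}{\partial\dot q}+\dot p\frac{\partial F}{\partial\dot p}\Big)+S_+\Big(\frac{\partial F}{\partial t^-}+D\Big(\dot q^-\frac{\partial F}{\partial\dot q^-}+\dot p^-\frac{\partial F}{\partial\dot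 p^-}\Big)\Big)-D(F)$. In particular $\frac{\delta\tilde H}{\delta p}=\alpha_1\dot q^++(\alpha_2+\alpha_3)\dot q+\alpha_4\dot q^--\partial_p(H+H^+)$, $\frac{\delta\tilde H}{\delta q}=-(\alpha_4\dot p^++(\alpha_2+\alpha_3)\dot p+\alpha_1\dot p^-+\partial_q(H+H^+))$, $\frac{\delta\tilde H}{\delta t}=D[\alpha_2(p\dot q-p^-\dot q^-)+\alpha_4(p^+\dot q-p\dot q^-)]+D(H)-\partial_t(H+H^+)$. $\Omega=X(\tilde H)+\tilde HD(\xi)=\nu^{-}(\alpha_{1}\dot{q}+\alpha_{2}\dot{q}^{-})+p^{-}(\alpha_{1}D(\eta)+\alpha_{2}D(\eta^{-}))+\nu(\alpha_{3}\dot{q}+\alpha_{4}\dot{q}^{-})+p(\alpha_{3}D(\eta)+\alpha_{4}D(\eta^{-}))+(\alpha_{2}p^{-}+\alpha_{4}p)\dot{q}^{-}D(\xi-\xi^{-})-\xi H_t-\eta H_q-\nu H_p-\xi^{-}H_{t^-}-\eta^{-}H_{q^-}-\nu^{-}H_{p^-}-HD(\xi)$. $X$ is prolonged to all variables at $t^-,t,t^+$ and their derivatives by the standard prolongation formulas: coefficient of $\partial_{\dot q}$ is $D(\eta)-\dot qD(\xi)$, of $\partial_{\dot p}$ is $D(\nu)-\dot pD(\xi)$, of $\partial_{\ddot q}$ is $D(D(\eta)-\dot qD(\xi))-\ddot qD(\xi)$, etc., and the shifted variables carry the shifted coefficients $S_\pm(\cdot)$. Variables are considered with the delay equation $t^+-t=t-t^-=\tau$.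 *)

theory Defs
  imports "HOL-Analysis.Analysis"
begin

fun Ck :: "nat \<Rightarrow> ('a::euclidean_space \<Rightarrow> real) \<Rightarrow> bool" where
  "Ck 0 g = continuous_on UNIV g"
| "Ck (Suc k) g = (g differentiable_on UNIV \<and>
      (\<forall>b\<in>Basis. Ck k (\<lambda>x. frechet_derivative g (at x) b)))"

definition smooth_fun :: "('a::euclidean_space \<Rightarrow> real) \<Rightarrow> bool" where
  "smooth_fun g = (\<forall>k. Ck k g)"

text \<open>Coordinates: a time level l (l = -1 for t^-, 0 for t, 1 for t^+, ...)
  and a kind: the time variable, the k-th derivative of q, the k-th derivative of p.
  So (0, Qc 0) is q, (-1, Qc 1) is qdot^-, (1, Pc 2) is pddot^+, (-1, Tc) is t^-.\<close>

datatype coord = Tc | Qc nat | Pc nat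

type_synonym jet = "int \<times> coord \<Rightarrow> real"
type_synonym expr = "jet \<Rightarrow> real"

definition pd :: "int \<times> coord \<Rightarrow> expr \<Rightarrow> expr" where
  "pd v F = (\<lambda>z. deriv (\<lambda>s. F (z(v := s))) (z v))"

text \<open>Total derivative D = sum over all levels of
  d_t + qdot d_q + pdot d_p + qddot d_qdot + pddot d_pdot + ...,
  realised as the directional derivative along the vector field with these
  components (each expression depends on finitely many coordinates).\<close>
definition tdir :: "jet \<Rightarrow> jet" where
  "tdir z = (\<lambda>(l, c). case c of Tc \<Rightarrow> 1
                              | Qc k \<Rightarrow> z (l, Qc (Suc k))
                              | Pc k \<Rightarrow> z (l, Pc (Suc k)))"

definition Dt :: "expr \<Rightarrow> expr" where
  "Dt F = (\<lambda>z. deriv (\<lambda>s. F (\<lambda>v. z v + s * tdir z v)) 0)"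

text \<open>Shift of levels; S_+ F = F o shift 1 (sends t^- to t, t to t^+, etc.).\<close>
definition shift :: "int \<Rightarrow> jet \<Rightarrow> jet" where
  "shift n z = (\<lambda>(l, c). z (l + n, c))"

definition Splus :: "expr \<Rightarrow> expr" where
  "Splus F = (\<lambda>z. F (shift 1 z))"

definition xiE :: "(real \<Rightarrow> real) \<Rightarrow> expr" where
  "xiE xi = (\<lambda>z. xi (z (0, Tc)))"

definition tqpE :: "(real \<times> real \<times> real \<Rightarrow> real) \<Rightarrow> expr" where
  "tqpE g = (\<lambda>z. g (z (0, Tc), z (0, Qc 0), z (0, Pc 0)))"

fun prol :: "expr \<Rightarrow> (nat \<Rightarrow> coord) \<Rightarrow> expr \<Rightarrow> nat \<Rightarrow> expr" where
  "prol xE C base 0 = base"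
| "prol xE C base (Suc k) = (\<lambda>z. Dt (prol xE C base k) z - z (0, C (Suc k)) * Dt xE z)"

text \<open>Components of the prolonged vector field at every level; the shifted
  variables carry the shifted coefficients.\<close>
definition Xcoef :: "(real \<Rightarrow> real) \<Rightarrow> (real \<times> real \<times> real \<Rightarrow> real) \<Rightarrow>
    (real \<times> real \<times> real \<Rightarrow> real) \<Rightarrow> jet \<Rightarrow> jet" where
  "Xcoef xi eta nu z = (\<lambda>(l, c). case c of
        Tc \<Rightarrow> xi (z (l, Tc))
      | Qc k \<Rightarrow> prol (xiE xi) Qc (tqpE eta) k (shift l z)
      | Pc k \<Rightarrow> prol (xiE xi) Pc (tqpE nu) k (shift l z))"

definition Xop :: "(real \<Rightarrow> real) \<Rightarrow> (real \<times> real \<times> real \<Rightarrow> real) \<Rightarrow>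
    (real \<times> real \<times> real \<Rightarrow> real) \<Rightarrow> expr \<Rightarrow> expr" where
  "Xop xi eta nu F = (\<lambda>z. deriv (\<lambda>s. F (\<lambda>v. z v + s * Xcoef xi eta nu z v)) 0)"

definition varP :: "expr \<Rightarrow> expr" where
  "varP F = (\<lambda>z. pd (0, Pc 0) F z - Dt (pd (0, Pc 1) F) z
     + Splus (\<lambda>w. pd (-1, Pc 0) F w - Dt (pd (-1, Pc 1) F) w) z)"

definition varQ :: "expr \<Rightarrow> expr" where
  "varQ F = (\<lambda>z. pd (0, Qc 0) F z - Dt (pd (0, Qc 1) F) z
     + Splus (\<lambda>w. pd (-1, Qc 0) F w - Dt (pd (-1, Qc 1) F) w) z)"

definition varT :: "expr \<Rightarrow> expr" where
  "varT F = (\<lambda>z. pd (0, Tc) F z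
     + Dt (\<lambda>w. w (0, Qc 1) * pd (0, Qc 1) F w + w (0, Pc 1) * pd (0, Pc 1) F w) z
     + Splus (\<lambda>w. pd (-1, Tc) F w
          + Dt (\<lambda>u. u (-1, Qc 1) * pd (-1, Qc 1) F u + u (-1, Pc 1) * pd (-1, Pc 1) F u) w) z
     - Dt F z)"

definition Htil :: "real \<Rightarrow> real \<Rightarrow> real \<Rightarrow> real \<Rightarrow>
    (real \<times> real \<times> real \<times> real \<times> real \<times> real \<Rightarrow> real) \<Rightarrow> expr" where
  "Htil a1 a2 a3 a4 H = (\<lambda>z.
      z (-1, Pc 0) * (a1 * z (0, Qc 1) + a2 * z (-1, Qc 1))
    + z (0, Pc 0) * (a3 * z (0, Qc 1) + a4 * z (-1, Qc 1))
    - H (z (0, Tc), z (-1, Tc), z (0, Qc 0), z (-1, Qc 0), z (0, Pc 0), z (-1, Pc 0)))"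

definition Omega :: "(real \<Rightarrow> real) \<Rightarrow> (real \<times> real \<times> real \<Rightarrow> real) \<Rightarrow>
    (real \<times> real \<times> real \<Rightarrow> real) \<Rightarrow> expr \<Rightarrow> expr" where
  "Omega xi eta nu Ht = (\<lambda>z. Xop xi eta nu Ht z + Ht z * Dt (xiE xi) z)"

end

theory Submission
  imports Defs
begin


fun pdn :: "('a::euclidean_space \<Rightarrow> real) \<Rightarrow> 'a list \<Rightarrow> 'a \<Rightarrow> real" where
  "pdn g [] = g"
| "pdn g (b # bs) = pdn (\<lambda>x. frechet_derivative g (at x) b) bs"

lemma pdn_snoc: "pdn g (bs @ [b]) = (\<lambda>x. frechet_derivative (pdn g bs) (at x) b)"
  by (induction bs arbitrary: g) auto

lemma smooth_pd: "smooth_fun g \<Longrightarrow> b \<in> Basis \<Longrightarrow> smooth_fun (\<lambda>x. frechet_derivative g (at x) b)"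
  unfolding smooth_fun_def
proof
  fix k assume "\<forall>k. Ck k g" "b \<in> Basis"
  then have "Ck (Suc k) g" by blast
  then show "Ck k (\<lambda>x. frechet_derivative g (at x) b)" using \<open>b \<in> Basis\<close> by simp
qed

lemma smooth_pdn: "smooth_fun g \<Longrightarrow> set bs \<subseteq> Basis \<Longrightarrow> smooth_fun (pdn g bs)"
  by (induction bs arbitrary: g) (auto intro: smooth_pd)

lemma smooth_diff: "smooth_fun g \<Longrightarrow> g differentiable (at x)"
proof -
  assume "smooth_fun g"
  then have "Ck (Suc 0) g" unfolding smooth_fun_def by blast
  then have "g differentiable_on UNIV" by simp
  then show ?thesis unfolding differentiable_on_def by auto
qed

lemma smooth_cont: "smooth_fun g \<Longrightarrow> continuous_on UNIV g"
proof -
  assume "smooth_fun g"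
  then have "Ck 0 g" unfolding smooth_fun_def by blast
  then show ?thesis by simp
qed

lemma line_deriv:
  fixes g :: "'a::euclidean_space \<Rightarrow> real"
  assumes "g differentiable (at (y + s *\<^sub>R u))"
  shows "((\<lambda>s. g (y + s *\<^sub>R u)) has_real_derivative frechet_derivative g (at (y + s *\<^sub>R u)) u) (at s)"
proof -
  let ?p = "y + s *\<^sub>R u"
  have g: "(g has_derivative frechet_derivative g (at ?p)) (at ?p)"
    using assms frechet_derivative_works by blast
  have lin: "linear (frechet_derivative g (at ?p))"
    using assms by (rule linear_frechet_derivative)
  have l: "((\<lambda>s. y + s *\<^sub>R u) has_derivative (\<lambda>t. t *\<^sub>R u)) (at s)"
    by (auto intro!: derivative_eq_intros)
  have "((\<lambda>s. g (y + s *\<^sub>R u)) has_derivative (\<lambda>t. frechet_derivative g (at ?p) (t *\<^sub>R u))) (at s)"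
    using diff_chain_at[OF l g] by (simp add: o_def)
  moreover have "(\<lambda>t. frechet_derivative g (at ?p) (t *\<^sub>R u)) = (*) (frechet_derivative g (at ?p) u)"
    using linear_scale[OF lin] by (auto simp: mult.commute)
  ultimately show ?thesis unfolding has_field_derivative_def by simp
qed

lemma schwarzA:
  fixes g :: "'a::euclidean_space \<Rightarrow> real"
  assumes sg: "smooth_fun g" and b: "b \<in> Basis" and c: "c \<in> Basis" and h: "h > 0"
  shows "\<exists>\<theta> \<theta>'. 0 < \<theta> \<and> \<theta> < h \<and> 0 < \<theta>' \<and> \<theta>' < h \<and>
     g (x + h *\<^sub>R c + h *\<^sub>R b) - g (x + h *\<^sub>R c) - (g (x + h *\<^sub>R b) - g x)
       = h * (h * pdn g [b, c] (x + \<theta> *\<^sub>R b + \<theta>' *\<^sub>R c))"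
proof -
  define gb where "gb = (\<lambda>y. frechet_derivative g (at y) b)"
  have sgb: "smooth_fun gb" unfolding gb_def using sg b by (rule smooth_pd)
  have gbc: "pdn g [b, c] = (\<lambda>y. frechet_derivative gb (at y) c)" by (simp add: gb_def)
  have d1: "DERIV (\<lambda>u. g (x + h *\<^sub>R c + u *\<^sub>R b) - g (x + u *\<^sub>R b)) u :>
        (gb (x + h *\<^sub>R c + u *\<^sub>R b) - gb (x + u *\<^sub>R b))" for u
    unfolding gb_def
    by (intro DERIV_diff line_deriv smooth_diff[OF sg])
  obtain \<theta> where th: "0 < \<theta>" "\<theta> < h" and
    e1: "g (x + h *\<^sub>R c + h *\<^sub>R b) - g (x + h *\<^sub>R b) - (g (x + h *\<^sub>R c + 0 *\<^sub>R b) - g (x + 0 *\<^sub>R b))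
       = (h - 0) * (gb (x + h *\<^sub>R c + \<theta> *\<^sub>R b) - gb (x + \<theta> *\<^sub>R b))"
    using MVT2[OF h d1] by blast
  have d2: "DERIV (\<lambda>v. gb (x + \<theta> *\<^sub>R b + v *\<^sub>R c)) v :> frechet_derivative gb (at (x + \<theta> *\<^sub>R b + v *\<^sub>R c)) c" for v
    by (intro line_deriv smooth_diff[OF sgb])
  obtain \<theta>' where th': "0 < \<theta>'" "\<theta>' < h" and
    e2: "gb (x + \<theta> *\<^sub>R b + h *\<^sub>R c) - gb (x + \<theta> *\<^sub>R b + 0 *\<^sub>R c)
       = (h - 0) * frechet_derivative gb (at (x + \<theta> *\<^sub>R b + \<theta>' *\<^sub>R c)) c"
    using MVT2[OF h d2] by blast
  have "x + h *\<^sub>R c + \<theta> *\<^sub>R b = x + \<theta> *\<^sub>R b + h *\<^sub>R c" by (simp add: algebra_simps)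
  then show ?thesis using th th' e1 e2 gbc
    by (intro exI[of _ \<theta>] exI[of _ \<theta>']) (auto simp: algebra_simps)
qed

lemma schwarz:
  fixes g :: "'a::euclidean_space \<Rightarrow> real"
  assumes sg: "smooth_fun g" and b: "b \<in> Basis" and c: "c \<in> Basis"
  shows "pdn g [b, c] x = pdn g [c, b] x"
proof (rule ccontr)
  define d where "d = pdn g [b, c] x - pdn g [c, b] x"
  assume "pdn g [b, c] x \<noteq> pdn g [c, b] x"
  then have dpos: "abs d / 3 > 0" unfolding d_def by simp
  have "smooth_fun (pdn g [b, c])"
    by (rule smooth_pdn) (use sg b c in auto)
  moreover have "smooth_fun (pdn g [c, b])"
    by (rule smooth_pdn) (use sg b c in auto)
  ultimately have cont: "continuous (at x) (pdn g [b, c])" "continuous (at x) (pdn g [c, b])"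
    using smooth_cont continuous_on_eq_continuous_at[OF open_UNIV] by blast+
  obtain d1 where d1: "d1 > 0" "\<forall>y. dist y x < d1 \<longrightarrow> dist (pdn g [b, c] y) (pdn g [b, c] x) < abs d / 3"
    using cont(1) dpos unfolding continuous_at_eps_delta by blast
  obtain d2 where d2: "d2 > 0" "\<forall>y. dist y x < d2 \<longrightarrow> dist (pdn g [c, b] y) (pdn g [c, b] x) < abs d / 3"
    using cont(2) dpos unfolding continuous_at_eps_delta by blast
  define h where "h = min d1 d2 / 3"
  have h: "h > 0" using d1 d2 by (simp add: h_def)
  obtain t1 t1' where t1: "0 < t1" "t1 < h" "0 < t1'" "t1' < h" and
    A: "g (x + h *\<^sub>R c + h *\<^sub>R b) - g (x + h *\<^sub>R c) - (g (x + h *\<^sub>R b) - g x)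
       = h * (h * pdn g [b, c] (x + t1 *\<^sub>R b + t1' *\<^sub>R c))"
    using schwarzA[OF sg b c h] by blast
  obtain t2 t2' where t2: "0 < t2" "t2 < h" "0 < t2'" "t2' < h" and
    B: "g (x + h *\<^sub>R b + h *\<^sub>R c) - g (x + h *\<^sub>R b) - (g (x + h *\<^sub>R c) - g x)
       = h * (h * pdn g [c, b] (x + t2 *\<^sub>R c + t2' *\<^sub>R b))"
    using schwarzA[OF sg c b h] by blast
  have "x + h *\<^sub>R c + h *\<^sub>R b = x + h *\<^sub>R b + h *\<^sub>R c" by (simp add: algebra_simps)
  with A B have "h * (h * pdn g [b, c] (x + t1 *\<^sub>R b + t1' *\<^sub>R c)) = h * (h * pdn g [c, b] (x + t2 *\<^sub>R c + t2' *\<^sub>R b))"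
    by (simp add: algebra_simps)
  with h have eq: "pdn g [b, c] (x + t1 *\<^sub>R b + t1' *\<^sub>R c) = pdn g [c, b] (x + t2 *\<^sub>R c + t2' *\<^sub>R b)"
    by simp
  have nb: "norm b = 1" "norm c = 1" using b c by auto
  have "dist (x + t1 *\<^sub>R b + t1' *\<^sub>R c) x \<le> t1 + t1'"
    using norm_triangle_ineq[of "t1 *\<^sub>R b" "t1' *\<^sub>R c"] t1 nb by (simp add: dist_norm)
  also have "\<dots> < d1" using t1 h_def d1 by linarith
  finally have c1: "dist (pdn g [b, c] (x + t1 *\<^sub>R b + t1' *\<^sub>R c)) (pdn g [b, c] x) < abs d / 3"
    using d1 by blast
  have "dist (x + t2 *\<^sub>R c + t2' *\<^sub>R b) x \<le> t2 + t2'"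
    using norm_triangle_ineq[of "t2 *\<^sub>R c" "t2' *\<^sub>R b"] t2 nb by (simp add: dist_norm)
  also have "\<dots> < d2" using t2 h_def d2 by linarith
  finally have c2: "dist (pdn g [c, b] (x + t2 *\<^sub>R c + t2' *\<^sub>R b)) (pdn g [c, b] x) < abs d / 3"
    using d2 by blast
  have aux: "\<And>A B P Q::real. \<bar>A - P\<bar> < \<bar>P - Q\<bar> / 3 \<Longrightarrow> \<bar>B - Q\<bar> < \<bar>P - Q\<bar> / 3 \<Longrightarrow> A = B \<Longrightarrow> False"
    by (simp add: abs_if split: if_split_asm)
  from c1 c2 eq show False unfolding dist_real_def d_def by (rule aux)
qed




type_synonym r6 = "real \<times> real \<times> real \<times> real \<times> real \<times> real"
type_synonym r3 = "real \<times> real \<times> real"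

definition e6 :: "nat \<Rightarrow> r6" where
  "e6 i = (if i = 0 then (1,0,0,0,0,0) else if i = 1 then (0,1,0,0,0,0) else if i = 2 then (0,0,1,0,0,0)
     else if i = 3 then (0,0,0,1,0,0) else if i = 4 then (0,0,0,0,1,0) else (0,0,0,0,0,1))"

definition e3 :: "nat \<Rightarrow> r3" where
  "e3 i = (if i = 0 then (1,0,0) else if i = 1 then (0,1,0) else (0,0,1))"

lemma e6_Basis: "e6 i \<in> Basis"
  by (auto simp: e6_def Basis_prod_def zero_prod_def)

lemma e3_Basis: "e3 i \<in> Basis"
  by (auto simp: e3_def Basis_prod_def zero_prod_def)

lemma lin6:
  assumes "linear L"
  shows "L (u1,u2,u3,u4,u5,u6) = u1 * L (e6 0) + u2 * L (e6 1) + u3 * L (e6 2) + u4 * L (e6 3)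
     + u5 * L (e6 4) + u6 * L (e6 5)"
proof -
  have "(u1,u2,u3,u4,u5,u6) = u1 *\<^sub>R e6 0 + u2 *\<^sub>R e6 1 + u3 *\<^sub>R e6 2 + u4 *\<^sub>R e6 3 + u5 *\<^sub>R e6 4 + u6 *\<^sub>R e6 5"
    by (simp add: e6_def)
  then show ?thesis using assms by (simp add: linear_add linear_scale)
qed

lemma lin3:
  assumes "linear L"
  shows "L (u1,u2,u3) = u1 * L (e3 0) + u2 * L (e3 1) + u3 * L (e3 2)"
proof -
  have "(u1,u2,u3) = u1 *\<^sub>R e3 0 + u2 *\<^sub>R e3 1 + u3 *\<^sub>R e3 2"
    by (simp add: e3_def)
  then show ?thesis using assms by (simp add: linear_add linear_scale)
qed

definition dnf :: "nat \<Rightarrow> (real \<Rightarrow> real) \<Rightarrow> real \<Rightarrow> real" where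
  "dnf k f = (deriv ^^ k) f"

lemma deriv_fd:
  fixes g :: "real \<Rightarrow> real"
  assumes "g differentiable (at x)"
  shows "DERIV g x :> frechet_derivative g (at x) 1"
proof -
  have g: "(g has_derivative frechet_derivative g (at x)) (at x)"
    using assms frechet_derivative_works by blast
  have lin: "linear (frechet_derivative g (at x))" using assms by (rule linear_frechet_derivative)
  have "frechet_derivative g (at x) = (*) (frechet_derivative g (at x) 1)"
  proof
    fix h :: real
    have "frechet_derivative g (at x) (h *\<^sub>R 1) = h *\<^sub>R frechet_derivative g (at x) 1"
      using linear_scale[OF lin] by blast
    then show "frechet_derivative g (at x) h = frechet_derivative g (at x) 1 * h" by simp
  qed
  with g show ?thesis unfolding has_field_derivative_def by simp
qed

lemma smooth_deriv:
  fixes g :: "real \<Rightarrow> real"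
  assumes "smooth_fun g"
  shows "smooth_fun (deriv g)"
proof -
  have "deriv g = (\<lambda>x. frechet_derivative g (at x) 1)"
    using deriv_fd[OF smooth_diff[OF assms]] DERIV_imp_deriv by blast
  moreover have "smooth_fun (\<lambda>x. frechet_derivative g (at x) 1)"
    using assms by (rule smooth_pd) simp
  ultimately show ?thesis by simp
qed

lemma smooth_dnf: "smooth_fun f \<Longrightarrow> smooth_fun (dnf k f)"
  by (induction k) (auto simp: dnf_def intro: smooth_deriv)

lemma DERIV_dnf: "smooth_fun f \<Longrightarrow> DERIV (dnf k f) x :> dnf (Suc k) f x"
proof -
  assume "smooth_fun f"
  then have "smooth_fun (dnf k f)" by (rule smooth_dnf)
  then have "dnf k f differentiable (at x)" by (rule smooth_diff)
  then have "DERIV (dnf k f) x :> deriv (dnf k f) x"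
    using DERIV_deriv_iff_real_differentiable by blast
  then show ?thesis by (simp add: dnf_def)
qed

lemma periodic_deriv:
  fixes g :: "real \<Rightarrow> real"
  assumes per: "\<forall>t. g (t + \<tau>) = g t" and d: "\<And>x. g differentiable (at x)"
  shows "deriv g (t + \<tau>) = deriv g t"
proof -
  have "DERIV g (t + \<tau>) :> deriv g (t + \<tau>)"
    using d DERIV_deriv_iff_real_differentiable by blast
  then have "DERIV (\<lambda>x. g (x + \<tau>)) t :> deriv g (t + \<tau>)"
    using DERIV_shift by blast
  moreover have "(\<lambda>x. g (x + \<tau>)) = g" using per by auto
  ultimately have "DERIV g t :> deriv g (t + \<tau>)" by simp
  then show ?thesis by (rule DERIV_imp_deriv[symmetric])
qed

lemma periodic_dnf:
  assumes "smooth_fun f" "\<forall>t. f (t + \<tau>) = f t"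
  shows "\<forall>t. dnf k f (t + \<tau>) = dnf k f t"
proof (induction k)
  case 0 then show ?case using assms by (simp add: dnf_def)
next
  case (Suc k)
  have "\<And>x. dnf k f differentiable (at x)" using smooth_diff smooth_dnf assms(1) by blast
  then have "\<forall>t. deriv (dnf k f) (t + \<tau>) = deriv (dnf k f) t"
    using periodic_deriv[OF Suc.IH] by blast
  then show ?case by (simp add: dnf_def)
qed

lemma periodic_dnf_minus:
  assumes "smooth_fun f" "\<forall>t. f (t + \<tau>) = f t"
  shows "dnf k f (t - \<tau>) = dnf k f t"
  using periodic_dnf[OF assms, of k] by (metis diff_add_cancel)

lemma periodic_dnf_plus:
  assumes "smooth_fun f" "\<forall>t. f (t + \<tau>) = f t"
  shows "dnf k f (t + \<tau>) = dnf k f t"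
  using periodic_dnf[OF assms, of k] by blast

definition hd6 :: "(r6 \<Rightarrow> real) \<Rightarrow> nat list \<Rightarrow> r6 \<Rightarrow> real" where
  "hd6 H ms = pdn H (map e6 ms)"

definition hd3 :: "(r3 \<Rightarrow> real) \<Rightarrow> nat list \<Rightarrow> r3 \<Rightarrow> real" where
  "hd3 g ms = pdn g (map e3 ms)"

lemma hd6_swap: "smooth_fun H \<Longrightarrow> j < i \<Longrightarrow> hd6 H [i, j] = hd6 H [j, i]"
  unfolding hd6_def
proof
  fix x assume "smooth_fun H"
  then show "pdn H (map e6 [i, j]) x = pdn H (map e6 [j, i]) x"
    using schwarz[OF _ e6_Basis e6_Basis] by (simp only: list.map)
qed

lemma hd3_swap: "smooth_fun H \<Longrightarrow> j < i \<Longrightarrow> hd3 H [i, j] = hd3 H [j, i]"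
  unfolding hd3_def
proof
  fix x assume "smooth_fun H"
  then show "pdn H (map e3 [i, j]) x = pdn H (map e3 [j, i]) x"
    using schwarz[OF _ e3_Basis e3_Basis] by (simp only: list.map)
qed

lemma smooth_hd6: "smooth_fun H \<Longrightarrow> smooth_fun (hd6 H ms)"
  unfolding hd6_def by (rule smooth_pdn) (auto simp: e6_Basis)

lemma smooth_hd3: "smooth_fun H \<Longrightarrow> smooth_fun (hd3 H ms)"
  unfolding hd3_def by (rule smooth_pdn) (auto simp: e3_Basis)

lemma hd6_snoc: "frechet_derivative (hd6 H ms) (at p) (e6 i) = hd6 H (ms @ [i]) p"
  unfolding hd6_def by (simp add: pdn_snoc)

lemma hd3_snoc: "frechet_derivative (hd3 H ms) (at p) (e3 i) = hd3 H (ms @ [i]) p"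
  unfolding hd3_def by (simp add: pdn_snoc)

lemma DERIV_hd6:
  assumes "smooth_fun H"
  shows "DERIV (\<lambda>s. hd6 H ms ((a1,a2,a3,a4,a5,a6) + s *\<^sub>R (u1,u2,u3,u4,u5,u6))) s :>
    u1 * hd6 H (ms@[0]) ((a1,a2,a3,a4,a5,a6) + s *\<^sub>R (u1,u2,u3,u4,u5,u6))
  + u2 * hd6 H (ms@[1]) ((a1,a2,a3,a4,a5,a6) + s *\<^sub>R (u1,u2,u3,u4,u5,u6))
  + u3 * hd6 H (ms@[2]) ((a1,a2,a3,a4,a5,a6) + s *\<^sub>R (u1,u2,u3,u4,u5,u6))
  + u4 * hd6 H (ms@[3]) ((a1,a2,a3,a4,a5,a6) + s *\<^sub>R (u1,u2,u3,u4,u5,u6))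
  + u5 * hd6 H (ms@[4]) ((a1,a2,a3,a4,a5,a6) + s *\<^sub>R (u1,u2,u3,u4,u5,u6))
  + u6 * hd6 H (ms@[5]) ((a1,a2,a3,a4,a5,a6) + s *\<^sub>R (u1,u2,u3,u4,u5,u6))"
proof -
  let ?y = "(a1,a2,a3,a4,a5,a6)" and ?u = "(u1,u2,u3,u4,u5,u6)"
  have d: "hd6 H ms differentiable (at (?y + s *\<^sub>R ?u))"
    by (rule smooth_diff[OF smooth_hd6[OF assms]])
  have lin: "linear (frechet_derivative (hd6 H ms) (at (?y + s *\<^sub>R ?u)))"
    using d by (rule linear_frechet_derivative)
  show ?thesis using line_deriv[OF d] lin6[OF lin] by (simp add: hd6_snoc)
qed

lemma DERIV_hd3:
  assumes "smooth_fun H"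
  shows "DERIV (\<lambda>s. hd3 H ms ((a1,a2,a3) + s *\<^sub>R (u1,u2,u3))) s :>
    u1 * hd3 H (ms@[0]) ((a1,a2,a3) + s *\<^sub>R (u1,u2,u3))
  + u2 * hd3 H (ms@[1]) ((a1,a2,a3) + s *\<^sub>R (u1,u2,u3))
  + u3 * hd3 H (ms@[2]) ((a1,a2,a3) + s *\<^sub>R (u1,u2,u3))"
proof -
  let ?y = "(a1,a2,a3)" and ?u = "(u1,u2,u3)"
  have d: "hd3 H ms differentiable (at (?y + s *\<^sub>R ?u))"
    by (rule smooth_diff[OF smooth_hd3[OF assms]])
  have lin: "linear (frechet_derivative (hd3 H ms) (at (?y + s *\<^sub>R ?u)))"
    using d by (rule linear_frechet_derivative)
  show ?thesis using line_deriv[OF d] lin3[OF lin] by (simp add: hd3_snoc)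
qed




datatype tm = C real | V "int \<times> coord" | Add tm tm | Sub tm tm | Mul tm tm
  | HA "nat list" int | EA "nat list" int | NA "nat list" int | FA nat int

definition hargs :: "int \<Rightarrow> jet \<Rightarrow> r6" where
  "hargs l z = (z (l, Tc), z (l - 1, Tc), z (l, Qc 0), z (l - 1, Qc 0), z (l, Pc 0), z (l - 1, Pc 0))"

definition targs :: "int \<Rightarrow> jet \<Rightarrow> r3" where
  "targs l z = (z (l, Tc), z (l, Qc 0), z (l, Pc 0))"

primrec ev :: "(r6 \<Rightarrow> real) \<Rightarrow> (r3 \<Rightarrow> real) \<Rightarrow> (r3 \<Rightarrow> real) \<Rightarrow> (real \<Rightarrow> real) \<Rightarrow> tm \<Rightarrow> jet \<Rightarrow> real" where
  "ev H eta nu f (C r) z = r"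
| "ev H eta nu f (V x) z = z x"
| "ev H eta nu f (Add a b) z = ev H eta nu f a z + ev H eta nu f b z"
| "ev H eta nu f (Sub a b) z = ev H eta nu f a z - ev H eta nu f b z"
| "ev H eta nu f (Mul a b) z = ev H eta nu f a z * ev H eta nu f b z"
| "ev H eta nu f (HA ms l) z = hd6 H ms (hargs l z)"
| "ev H eta nu f (EA ms l) z = hd3 eta ms (targs l z)"
| "ev H eta nu f (NA ms l) z = hd3 nu ms (targs l z)"
| "ev H eta nu f (FA k l) z = dnf k f (z (l, Tc))"

primrec evD :: "(r6 \<Rightarrow> real) \<Rightarrow> (r3 \<Rightarrow> real) \<Rightarrow> (r3 \<Rightarrow> real) \<Rightarrow> (real \<Rightarrow> real) \<Rightarrow> jet \<Rightarrow> tm \<Rightarrow> jet \<Rightarrow> real" where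
  "evD H eta nu f w (C r) z = 0"
| "evD H eta nu f w (V x) z = w x"
| "evD H eta nu f w (Add a b) z = evD H eta nu f w a z + evD H eta nu f w b z"
| "evD H eta nu f w (Sub a b) z = evD H eta nu f w a z - evD H eta nu f w b z"
| "evD H eta nu f w (Mul a b) z = evD H eta nu f w a z * ev H eta nu f b z + ev H eta nu f a z * evD H eta nu f w b z"
| "evD H eta nu f w (HA ms l) z =
     w (l, Tc) * hd6 H (ms @ [0]) (hargs l z) + w (l - 1, Tc) * hd6 H (ms @ [1]) (hargs l z)
   + w (l, Qc 0) * hd6 H (ms @ [2]) (hargs l z) + w (l - 1, Qc 0) * hd6 H (ms @ [3]) (hargs l z)
   + w (l, Pc 0) * hd6 H (ms @ [4]) (hargs l z) + w (l - 1, Pc 0) * hd6 H (ms @ [5]) (hargs l z)"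
| "evD H eta nu f w (EA ms l) z =
     w (l, Tc) * hd3 eta (ms @ [0]) (targs l z) + w (l, Qc 0) * hd3 eta (ms @ [1]) (targs l z)
   + w (l, Pc 0) * hd3 eta (ms @ [2]) (targs l z)"
| "evD H eta nu f w (NA ms l) z =
     w (l, Tc) * hd3 nu (ms @ [0]) (targs l z) + w (l, Qc 0) * hd3 nu (ms @ [1]) (targs l z)
   + w (l, Pc 0) * hd3 nu (ms @ [2]) (targs l z)"
| "evD H eta nu f w (FA k l) z = w (l, Tc) * dnf (Suc k) f (z (l, Tc))"

primrec symD :: "(int \<times> coord \<Rightarrow> tm) \<Rightarrow> tm \<Rightarrow> tm" where
  "symD W (C r) = C 0"
| "symD W (V x) = W x"
| "symD W (Add a b) = Add (symD W a) (symD W b)"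
| "symD W (Sub a b) = Sub (symD W a) (symD W b)"
| "symD W (Mul a b) = Add (Mul (symD W a) b) (Mul a (symD W b))"
| "symD W (HA ms l) =
     Add (Mul (W (l, Tc)) (HA (ms @ [0]) l)) (Add (Mul (W (l - 1, Tc)) (HA (ms @ [1]) l))
    (Add (Mul (W (l, Qc 0)) (HA (ms @ [2]) l)) (Add (Mul (W (l - 1, Qc 0)) (HA (ms @ [3]) l))
    (Add (Mul (W (l, Pc 0)) (HA (ms @ [4]) l)) (Mul (W (l - 1, Pc 0)) (HA (ms @ [5]) l))))))"
| "symD W (EA ms l) =
     Add (Mul (W (l, Tc)) (EA (ms @ [0]) l)) (Add (Mul (W (l, Qc 0)) (EA (ms @ [1]) l))
       (Mul (W (l, Pc 0)) (EA (ms @ [2]) l)))"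
| "symD W (NA ms l) =
     Add (Mul (W (l, Tc)) (NA (ms @ [0]) l)) (Add (Mul (W (l, Qc 0)) (NA (ms @ [1]) l))
       (Mul (W (l, Pc 0)) (NA (ms @ [2]) l)))"
| "symD W (FA k l) = Mul (W (l, Tc)) (FA (Suc k) l)"

primrec shiftT :: "int \<Rightarrow> tm \<Rightarrow> tm" where
  "shiftT n (C r) = C r"
| "shiftT n (V x) = V (fst x + n, snd x)"
| "shiftT n (Add a b) = Add (shiftT n a) (shiftT n b)"
| "shiftT n (Sub a b) = Sub (shiftT n a) (shiftT n b)"
| "shiftT n (Mul a b) = Mul (shiftT n a) (shiftT n b)"
| "shiftT n (HA ms l) = HA ms (l + n)"
| "shiftT n (EA ms l) = EA ms (l + n)"
| "shiftT n (NA ms l) = NA ms (l + n)"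
| "shiftT n (FA k l) = FA k (l + n)"

lemma symD_ev: "(\<And>x. ev H eta nu f (W x) z = w x) \<Longrightarrow> ev H eta nu f (symD W e) z = evD H eta nu f w e z"
  by (induction e) (auto simp: algebra_simps)

lemma shiftT_ev: "ev H eta nu f (shiftT n e) z = ev H eta nu f e (shift n z)"
  by (induction e) (auto simp: shift_def hargs_def targs_def algebra_simps split: prod.splits)

lemma ev_deriv:
  assumes sH: "smooth_fun H" and se: "smooth_fun eta" and sn: "smooth_fun nu" and sf: "smooth_fun f"
  shows "DERIV (\<lambda>s. ev H eta nu f e (\<lambda>v. z v + s * w v)) s :> evD H eta nu f w e (\<lambda>v. z v + s * w v)"
proof (induction e)
  case (C r) then show ?case by simp
next
  case (V x) then show ?case by (auto intro!: derivative_eq_intros)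
next
  case (Add a b) then show ?case by (auto intro!: derivative_eq_intros)
next
  case (Sub a b) then show ?case by (auto intro!: derivative_eq_intros)
next
  case (Mul a b) then show ?case by (auto intro!: derivative_eq_intros)
next
  case (HA ms l)
  have "\<And>s. hargs l (\<lambda>v. z v + s * w v) = hargs l z + s *\<^sub>R hargs l w"
    by (simp add: hargs_def)
  then show ?case using DERIV_hd6[OF sH, of ms] by (simp add: hargs_def)
next
  case (EA ms l)
  have "\<And>s. targs l (\<lambda>v. z v + s * w v) = targs l z + s *\<^sub>R targs l w"
    by (simp add: targs_def)
  then show ?case using DERIV_hd3[OF se, of ms] by (simp add: targs_def)
next
  case (NA ms l)
  have "\<And>s. targs l (\<lambda>v. z v + s * w v) = targs l z + s *\<^sub>R targs l w"
    by (simp add: targs_def)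
  then show ?case using DERIV_hd3[OF sn, of ms] by (simp add: targs_def)
next
  case (FA k l)
  have "DERIV (\<lambda>s. z (l, Tc) + s * w (l, Tc)) s :> w (l, Tc)"
    by (auto intro!: derivative_eq_intros)
  from DERIV_chain2[OF DERIV_dnf[OF sf] this] show ?case by (simp add: mult.commute)
qed




definition Wd :: "int \<times> coord \<Rightarrow> int \<times> coord \<Rightarrow> tm" where
  "Wd x = (\<lambda>v. if v = x then C 1 else C 0)"

definition Wt :: "int \<times> coord \<Rightarrow> tm" where
  "Wt = (\<lambda>(l, c). case c of Tc \<Rightarrow> C 1 | Qc k \<Rightarrow> V (l, Qc (Suc k)) | Pc k \<Rightarrow> V (l, Pc (Suc k)))"

definition xiT :: "real \<Rightarrow> int \<Rightarrow> tm" where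
  "xiT \<alpha> l = Add (Mul (C \<alpha>) (V (l, Tc))) (FA 0 l)"

primrec prolS :: "real \<Rightarrow> (nat \<Rightarrow> coord) \<Rightarrow> tm \<Rightarrow> nat \<Rightarrow> tm" where
  "prolS \<alpha> Cc b 0 = b"
| "prolS \<alpha> Cc b (Suc k) = Sub (symD Wt (prolS \<alpha> Cc b k)) (Mul (V (0, Cc (Suc k))) (symD Wt (xiT \<alpha> 0)))"

definition Wx :: "real \<Rightarrow> int \<times> coord \<Rightarrow> tm" where
  "Wx \<alpha> = (\<lambda>(l, c). case c of Tc \<Rightarrow> xiT \<alpha> l
      | Qc k \<Rightarrow> shiftT l (prolS \<alpha> Qc (EA [] 0) k)
      | Pc k \<Rightarrow> shiftT l (prolS \<alpha> Pc (NA [] 0) k))"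

locale sett =
  fixes H :: "r6 \<Rightarrow> real" and eta nu :: "r3 \<Rightarrow> real" and f :: "real \<Rightarrow> real" and \<alpha> :: real
  assumes sH: "smooth_fun H" and se: "smooth_fun eta" and sn: "smooth_fun nu" and sf: "smooth_fun f"
begin

abbreviation E where "E \<equiv> ev H eta nu f"

lemma deriv_ev: "deriv (\<lambda>s. E e (\<lambda>v. z v + s * w v)) s = evD H eta nu f w e (\<lambda>v. z v + s * w v)"
  by (rule DERIV_imp_deriv[OF ev_deriv[OF sH se sn sf]])

lemma pd_ev: "pd x (E e) = E (symD (Wd x) e)"
proof
  fix z :: jet
  define z0 where "z0 = z(x := (0::real))"
  define d where "d = (\<lambda>v. if v = x then 1 else (0::real))"
  have eq: "\<And>s. z(x := s) = (\<lambda>v. z0 v + s * d v)" by (auto simp: z0_def d_def)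
  have eq2: "(\<lambda>v. z0 v + z x * d v) = z" by (auto simp: z0_def d_def)
  have "pd x (E e) z = evD H eta nu f d e z"
    unfolding pd_def eq using deriv_ev[of e z0 d "z x"] eq2 by simp
  also have "\<dots> = E (symD (Wd x) e) z"
    by (rule symD_ev[symmetric]) (simp add: Wd_def d_def)
  finally show "pd x (E e) z = E (symD (Wd x) e) z" .
qed

lemma Dt_ev: "Dt (E e) = E (symD Wt e)"
proof
  fix z
  have "Dt (E e) z = evD H eta nu f (tdir z) e z"
    unfolding Dt_def using deriv_ev[of e z "tdir z" 0] by simp
  also have "\<dots> = E (symD Wt e) z"
    by (rule symD_ev[symmetric]) (auto simp: Wt_def tdir_def split: coord.splits)
  finally show "Dt (E e) z = E (symD Wt e) z" .
qed

lemma Splus_ev: "Splus (E e) = E (shiftT 1 e)"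
  by (auto simp: Splus_def shiftT_ev)

lemma xiE_ev: "xiE (\<lambda>t. \<alpha> * t + f t) = E (xiT \<alpha> 0)"
  by (auto simp: xiE_def xiT_def dnf_def)

lemma prol_ev: "prol (xiE (\<lambda>t. \<alpha> * t + f t)) Cc (E b) k = E (prolS \<alpha> Cc b k)"
  by (induction k) (auto simp: xiE_ev Dt_ev)

lemma tqp_eta: "tqpE eta = E (EA [] 0)"
  by (auto simp: tqpE_def hd3_def targs_def)

lemma tqp_nu: "tqpE nu = E (NA [] 0)"
  by (auto simp: tqpE_def hd3_def targs_def)

lemma Xop_ev: "Xop (\<lambda>t. \<alpha> * t + f t) eta nu (E e) = E (symD (Wx \<alpha>) e)"
proof
  fix z
  let ?w = "Xcoef (\<lambda>t. \<alpha> * t + f t) eta nu z"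
  have "Xop (\<lambda>t. \<alpha> * t + f t) eta nu (E e) z = evD H eta nu f ?w e z"
    unfolding Xop_def using deriv_ev[of e z ?w 0] by simp
  also have "\<dots> = E (symD (Wx \<alpha>) e) z"
  proof (rule symD_ev[symmetric])
    fix v :: "int \<times> coord"
    obtain l c where v: "v = (l, c)" by fastforce
    show "E (Wx \<alpha> v) z = ?w v"
      using prol_ev[of Qc "EA [] 0"] prol_ev[of Pc "NA [] 0"]
      by (cases c) (auto simp: v Wx_def Xcoef_def xiT_def dnf_def shiftT_ev tqp_eta tqp_nu)
  qed
  finally show "Xop (\<lambda>t. \<alpha> * t + f t) eta nu (E e) z = E (symD (Wx \<alpha>) e) z" .
qed

end



definition htS :: "real \<Rightarrow> real \<Rightarrow> real \<Rightarrow> real \<Rightarrow> tm" where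
  "htS a1 a2 a3 a4 = Sub (Add (Mul (V (-1, Pc 0)) (Add (Mul (C a1) (V (0, Qc 1))) (Mul (C a2) (V (-1, Qc 1)))))
      (Mul (V (0, Pc 0)) (Add (Mul (C a3) (V (0, Qc 1))) (Mul (C a4) (V (-1, Qc 1)))))) (HA [] 0)"

definition varPS :: "(nat \<Rightarrow> coord) \<Rightarrow> tm \<Rightarrow> tm" where
  "varPS Cc e = Add (Sub (symD (Wd (0, Cc 0)) e) (symD Wt (symD (Wd (0, Cc 1)) e)))
     (shiftT 1 (Sub (symD (Wd (-1, Cc 0)) e) (symD Wt (symD (Wd (-1, Cc 1)) e))))"

definition varTS :: "tm \<Rightarrow> tm" where
  "varTS e = Sub (Add (Add (symD (Wd (0, Tc)) e)
       (symD Wt (Add (Mul (V (0, Qc 1)) (symD (Wd (0, Qc 1)) e)) (Mul (V (0, Pc 1)) (symD (Wd (0, Pc 1)) e)))))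
     (shiftT 1 (Add (symD (Wd (-1, Tc)) e)
       (symD Wt (Add (Mul (V (-1, Qc 1)) (symD (Wd (-1, Qc 1)) e)) (Mul (V (-1, Pc 1)) (symD (Wd (-1, Pc 1)) e)))))))
     (symD Wt e)"

context sett begin

lemma varP_ev: "varP (E e) = E (varPS Pc e)"
  by (auto simp: varP_def varPS_def pd_ev Dt_ev Splus_def shiftT_ev)

lemma varQ_ev: "varQ (E e) = E (varPS Qc e)"
  by (auto simp: varQ_def varPS_def pd_ev Dt_ev Splus_def shiftT_ev)

lemma varT_ev: "varT (E e) = E (varTS e)"
proof -
  have eq: "\<And>a b l. (\<lambda>w. w (l, Qc 1) * E a w + w (l, Pc 1) * E b w) = E (Add (Mul (V (l, Qc 1)) a) (Mul (V (l, Pc 1)) b))"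
    by auto
  show ?thesis
    apply (simp only: varT_def pd_ev eq Dt_ev)
    apply (rule ext)
    apply (simp add: Splus_def shiftT_ev varTS_def shift_def)
    done
qed

lemma Ht_ev: "Htil a1 a2 a3 a4 H = E (htS a1 a2 a3 a4)"
  by (auto simp: Htil_def htS_def hd6_def hargs_def)

lemma Om_ev: "Omega (\<lambda>t. \<alpha> * t + f t) eta nu (E e) = E (Add (symD (Wx \<alpha>) e) (Mul e (symD Wt (xiT \<alpha> 0))))"
  by (auto simp: Omega_def Xop_ev xiE_ev Dt_ev)

lemma mainP:
  assumes per: "\<forall>t. f (t + \<tau>) = f t" and z1: "z (-1, Tc) = z (0, Tc) - \<tau>" and z2: "z (1, Tc) = z (0, Tc) + \<tau>"
  shows "E (varPS Pc (Add (symD (Wx \<alpha>) (htS a1 a2 a3 a4)) (Mul (htS a1 a2 a3 a4) (symD Wt (xiT \<alpha> 0))))) z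
    = E (symD (Wx \<alpha>) (varPS Pc (htS a1 a2 a3 a4))) z
      + E (symD (Wd (0, Pc 0)) (EA [] 0)) z * E (varPS Qc (htS a1 a2 a3 a4)) z
      + (E (symD (Wd (0, Pc 0)) (NA [] 0)) z + E (symD Wt (xiT \<alpha> 0)) z) * E (varPS Pc (htS a1 a2 a3 a4)) z"
  apply (simp add: varPS_def varTS_def htS_def Wx_def Wt_def Wd_def xiT_def z1 z2 periodic_dnf_minus[OF sf per] periodic_dnf_plus[OF sf per]
     hd6_swap[OF sH] hd3_swap[OF se] hd3_swap[OF sn])
  apply (simp add: algebra_simps)
  done

lemma mainQ:
  assumes per: "\<forall>t. f (t + \<tau>) = f t" and z1: "z (-1, Tc) = z (0, Tc) - \<tau>" and z2: "z (1, Tc) = z (0, Tc) + \<tau>"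
  shows "E (varPS Qc (Add (symD (Wx \<alpha>) (htS a1 a2 a3 a4)) (Mul (htS a1 a2 a3 a4) (symD Wt (xiT \<alpha> 0))))) z
    = E (symD (Wx \<alpha>) (varPS Qc (htS a1 a2 a3 a4))) z
      + (E (symD (Wd (0, Qc 0)) (EA [] 0)) z + E (symD Wt (xiT \<alpha> 0)) z) * E (varPS Qc (htS a1 a2 a3 a4)) z
      + E (symD (Wd (0, Qc 0)) (NA [] 0)) z * E (varPS Pc (htS a1 a2 a3 a4)) z"
  apply (simp add: varPS_def varTS_def htS_def Wx_def Wt_def Wd_def xiT_def z1 z2 periodic_dnf_minus[OF sf per] periodic_dnf_plus[OF sf per]
     hd6_swap[OF sH] hd3_swap[OF se] hd3_swap[OF sn])
  apply (simp add: algebra_simps)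
  done

lemma mainT:
  assumes per: "\<forall>t. f (t + \<tau>) = f t" and z1: "z (-1, Tc) = z (0, Tc) - \<tau>" and z2: "z (1, Tc) = z (0, Tc) + \<tau>"
  shows "E (varTS (Add (symD (Wx \<alpha>) (htS a1 a2 a3 a4)) (Mul (htS a1 a2 a3 a4) (symD Wt (xiT \<alpha> 0))))) z
    = E (symD (Wx \<alpha>) (varTS (htS a1 a2 a3 a4))) z
      + 2 * E (symD Wt (xiT \<alpha> 0)) z * E (varTS (htS a1 a2 a3 a4)) z
      + E (symD (Wd (0, Tc)) (EA [] 0)) z * E (varPS Qc (htS a1 a2 a3 a4)) z
      + E (symD (Wd (0, Tc)) (NA [] 0)) z * E (varPS Pc (htS a1 a2 a3 a4)) z"
  apply (simp add: varPS_def varTS_def htS_def Wx_def Wt_def Wd_def xiT_def z1 z2 periodic_dnf_minus[OF sf per] periodic_dnf_plus[OF sf per]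
     hd6_swap[OF sH] hd3_swap[OF se] hd3_swap[OF sn])
  apply (simp add: algebra_simps)
  done

end

theorem lemma3:
  fixes a1 a2 a3 a4 \<alpha> \<tau> :: real
    and H :: "real \<times> real \<times> real \<times> real \<times> real \<times> real \<Rightarrow> real"
    and eta nu :: "real \<times> real \<times> real \<Rightarrow> real"
    and f xi :: "real \<Rightarrow> real"
  assumes "\<tau> > 0"
    and "smooth_fun H" and "smooth_fun eta" and "smooth_fun nu" and "smooth_fun f"
    and "\<forall>t. f (t + \<tau>) = f t"
    and "\<forall>t. xi t = \<alpha> * t + f t"
  shows "\<forall>z. z (-1, Tc) = z (0, Tc) - \<tau> \<and> z (1, Tc) = z (0, Tc) + \<tau> \<longrightarrow>
     (let Ht = Htil a1 a2 a3 a4 H;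
          Om = Omega xi eta nu Ht;
          X = Xop xi eta nu;
          xidot = Dt (xiE xi) z
      in varP Om z = X (varP Ht) z
            + pd (0, Pc 0) (tqpE eta) z * varQ Ht z
            + (pd (0, Pc 0) (tqpE nu) z + xidot) * varP Ht z
       \<and> varQ Om z = X (varQ Ht) z
            + (pd (0, Qc 0) (tqpE eta) z + xidot) * varQ Ht z
            + pd (0, Qc 0) (tqpE nu) z * varP Ht z
       \<and> varT Om z = X (varT Ht) z
            + 2 * xidot * varT Ht z
            + pd (0, Tc) (tqpE eta) z * varQ Ht z
            + pd (0, Tc) (tqpE nu) z * varP Ht z)"
proof (intro allI impI)
  fix z :: jet
  assume zc: "z (-1, Tc) = z (0, Tc) - \<tau> \<and> z (1, Tc) = z (0, Tc) + \<tau>"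
  interpret S: sett H eta nu f \<alpha>
    by unfold_locales (use assms in auto)
  have xi: "xi = (\<lambda>t. \<alpha> * t + f t)" using assms(7) by auto
  note P = S.mainP[OF assms(6) conjunct1[OF zc] conjunct2[OF zc], of a1 a2 a3 a4]
  note Q = S.mainQ[OF assms(6) conjunct1[OF zc] conjunct2[OF zc], of a1 a2 a3 a4]
  note T = S.mainT[OF assms(6) conjunct1[OF zc] conjunct2[OF zc], of a1 a2 a3 a4]
  show "let Ht = Htil a1 a2 a3 a4 H;
          Om = Omega xi eta nu Ht;
          X = Xop xi eta nu;
          xidot = Dt (xiE xi) z
      in varP Om z = X (varP Ht) z
            + pd (0, Pc 0) (tqpE eta) z * varQ Ht z
            + (pd (0, Pc 0) (tqpE nu) z + xidot) * varP Ht z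
       \<and> varQ Om z = X (varQ Ht) z
            + (pd (0, Qc 0) (tqpE eta) z + xidot) * varQ Ht z
            + pd (0, Qc 0) (tqpE nu) z * varP Ht z
       \<and> varT Om z = X (varT Ht) z
            + 2 * xidot * varT Ht z
            + pd (0, Tc) (tqpE eta) z * varQ Ht z
            + pd (0, Tc) (tqpE nu) z * varP Ht z"
    unfolding Let_def xi S.Ht_ev S.Om_ev S.varP_ev S.varQ_ev S.varT_ev S.Xop_ev S.tqp_eta S.tqp_nu S.pd_ev
      S.xiE_ev S.Dt_ev
    using P Q T by blast
qed

end
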